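(* If $\mathcal D$ is a probabilistic database with the finite moments property and $\Phi$ is an FO-view over the schema of $\mathcal D$, then $\Phi(\mathcal D)$ also has the finite moments property.
   Context: Fix a countably infinite universe $U$. A database schema is a finite nonempty set of relation symbols with arities; facts are $R(u_1,\dots,u_{\mathrm{ar}(R)})$ with $u_i\in U$; an instance is a finite set of facts ($|D|$ = number of facts); $\mathrm{adom}(D)$ is the set of elements of $U$ occurring in $D$. A probabilistic database (PDB) is a discrete probability space $(\mathbb D,P)$ with $\mathbb D$ a nonempty countable set of instances. It has the finite moments property if $\sum_{D\in\mathbb D}|D|^kP(\{D\})<\infty$ for all $k\in\mathbb N_+$. An FO-view consists of one first-order formula $\Phi_R(x_1,\dots,x_{\mathrm{ar}(R)})$ (constants from $U$ allowed) per output relation symbol $R$, evaluated under active domain semantics (quantifiers range over $\mathrm{adom}(D)$ and the formula's constants), mapping $D$ to the instance containing $R(\bar a)$ for all $\bar a$ over $\mathrm{adom}(D)\cup\mathrm{adom}(\Phi_R)$ with $D\models\Phi_R[\bar a]$. The image $\Phi(\mathcal D)$ of a PDB $(\mathbb D,P)$ is the PDB on $\Phi(\mathbb D)$ with $P'(\{D'\})=P(\{D:\Phi(D)=D'\})$. *)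

theory Defs
  imports "HOL-Probability.Probability"
begin

text \<open>Facts are pairs (relation symbol, tuple of universe elements); an instance is a
finite set of facts; a PDB is a pmf on instances (countable support, probability space).\<close>

type_synonym ('r, 'u) fact = "'r \<times> 'u list"
type_synonym ('r, 'u) inst = "('r, 'u) fact set"

definition is_schema :: "'r set \<Rightarrow> bool" where
  "is_schema S \<longleftrightarrow> finite S \<and> S \<noteq> {}"

definition is_instance :: "('r \<Rightarrow> nat) \<Rightarrow> 'r set \<Rightarrow> ('r, 'u) inst \<Rightarrow> bool" where
  "is_instance ar S D \<longleftrightarrow> finite D \<and> (\<forall>(R, as) \<in> D. R \<in> S \<and> length as = ar R)"

definition adom :: "('r, 'u) inst \<Rightarrow> 'u set" where
  "adom D = (\<Union>(R, as) \<in> D. set as)"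

definition is_pdb :: "('r \<Rightarrow> nat) \<Rightarrow> 'r set \<Rightarrow> ('r, 'u) inst pmf \<Rightarrow> bool" where
  "is_pdb ar S P \<longleftrightarrow> is_schema S \<and> (\<forall>D \<in> set_pmf P. is_instance ar S D)"

definition finite_moments :: "('r, 'u) inst pmf \<Rightarrow> bool" where
  "finite_moments P \<longleftrightarrow>
     (\<forall>k::nat. k > 0 \<longrightarrow> (\<lambda>D. real (card D) ^ k * pmf P D) summable_on set_pmf P)"

datatype 'u fo_term = Var nat | Const 'u

datatype ('r, 'u) fo =
    Atom 'r "'u fo_term list"
  | Eq "'u fo_term" "'u fo_term"
  | Neg "('r, 'u) fo"
  | Conj "('r, 'u) fo" "('r, 'u) fo"
  | Disj "('r, 'u) fo" "('r, 'u) fo"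
  | Ex nat "('r, 'u) fo"
  | All nat "('r, 'u) fo"

fun term_consts :: "'u fo_term \<Rightarrow> 'u set" where
  "term_consts (Var x) = {}"
| "term_consts (Const c) = {c}"

fun term_vars :: "'u fo_term \<Rightarrow> nat set" where
  "term_vars (Var x) = {x}"
| "term_vars (Const c) = {}"

fun eval_term :: "(nat \<Rightarrow> 'u) \<Rightarrow> 'u fo_term \<Rightarrow> 'u" where
  "eval_term v (Var x) = v x"
| "eval_term v (Const c) = c"

fun fo_consts :: "('r, 'u) fo \<Rightarrow> 'u set" where
  "fo_consts (Atom R ts) = (\<Union>t \<in> set ts. term_consts t)"
| "fo_consts (Eq t1 t2) = term_consts t1 \<union> term_consts t2"
| "fo_consts (Neg \<phi>) = fo_consts \<phi>"
| "fo_consts (Conj \<phi> \<psi>) = fo_consts \<phi> \<union> fo_consts \<psi>"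
| "fo_consts (Disj \<phi> \<psi>) = fo_consts \<phi> \<union> fo_consts \<psi>"
| "fo_consts (Ex x \<phi>) = fo_consts \<phi>"
| "fo_consts (All x \<phi>) = fo_consts \<phi>"

fun fo_free :: "('r, 'u) fo \<Rightarrow> nat set" where
  "fo_free (Atom R ts) = (\<Union>t \<in> set ts. term_vars t)"
| "fo_free (Eq t1 t2) = term_vars t1 \<union> term_vars t2"
| "fo_free (Neg \<phi>) = fo_free \<phi>"
| "fo_free (Conj \<phi> \<psi>) = fo_free \<phi> \<union> fo_free \<psi>"
| "fo_free (Disj \<phi> \<psi>) = fo_free \<phi> \<union> fo_free \<psi>"
| "fo_free (Ex x \<phi>) = fo_free \<phi> - {x}"
| "fo_free (All x \<phi>) = fo_free \<phi> - {x}"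

fun fo_wf :: "('r \<Rightarrow> nat) \<Rightarrow> 'r set \<Rightarrow> ('r, 'u) fo \<Rightarrow> bool" where
  "fo_wf ar S (Atom R ts) = (R \<in> S \<and> length ts = ar R)"
| "fo_wf ar S (Eq t1 t2) = True"
| "fo_wf ar S (Neg \<phi>) = fo_wf ar S \<phi>"
| "fo_wf ar S (Conj \<phi> \<psi>) = (fo_wf ar S \<phi> \<and> fo_wf ar S \<psi>)"
| "fo_wf ar S (Disj \<phi> \<psi>) = (fo_wf ar S \<phi> \<and> fo_wf ar S \<psi>)"
| "fo_wf ar S (Ex x \<phi>) = fo_wf ar S \<phi>"
| "fo_wf ar S (All x \<phi>) = fo_wf ar S \<phi>"

fun fo_sat :: "('r, 'u) inst \<Rightarrow> 'u set \<Rightarrow> (nat \<Rightarrow> 'u) \<Rightarrow> ('r, 'u) fo \<Rightarrow> bool" where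
  "fo_sat D A v (Atom R ts) = ((R, map (eval_term v) ts) \<in> D)"
| "fo_sat D A v (Eq t1 t2) = (eval_term v t1 = eval_term v t2)"
| "fo_sat D A v (Neg \<phi>) = (\<not> fo_sat D A v \<phi>)"
| "fo_sat D A v (Conj \<phi> \<psi>) = (fo_sat D A v \<phi> \<and> fo_sat D A v \<psi>)"
| "fo_sat D A v (Disj \<phi> \<psi>) = (fo_sat D A v \<phi> \<or> fo_sat D A v \<psi>)"
| "fo_sat D A v (Ex x \<phi>) = (\<exists>a \<in> A. fo_sat D A (v(x := a)) \<phi>)"
| "fo_sat D A v (All x \<phi>) = (\<forall>a \<in> A. fo_sat D A (v(x := a)) \<phi>)"

definition tuple_val :: "'u list \<Rightarrow> nat \<Rightarrow> 'u" where
  "tuple_val as i = (if i < length as then as ! i else undefined)"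

definition adom_sat :: "('r, 'u) inst \<Rightarrow> ('r, 'u) fo \<Rightarrow> 'u list \<Rightarrow> bool" where
  "adom_sat D \<phi> as = fo_sat D (adom D \<union> fo_consts \<phi>) (tuple_val as) \<phi>"

definition is_fo_view ::
  "('r \<Rightarrow> nat) \<Rightarrow> 'r set \<Rightarrow> ('s \<Rightarrow> nat) \<Rightarrow> 's set \<Rightarrow> ('s \<Rightarrow> ('r, 'u) fo) \<Rightarrow> bool" where
  "is_fo_view ar S ar' S' \<Phi> \<longleftrightarrow> is_schema S' \<and>
     (\<forall>R \<in> S'. fo_wf ar S (\<Phi> R) \<and> fo_free (\<Phi> R) \<subseteq> {..<ar' R})"

definition apply_view ::
  "('s \<Rightarrow> nat) \<Rightarrow> 's set \<Rightarrow> ('s \<Rightarrow> ('r, 'u) fo) \<Rightarrow> ('r, 'u) inst \<Rightarrow> ('s, 'u) inst" where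
  "apply_view ar' S' \<Phi> D = {(R, as). R \<in> S' \<and> length as = ar' R \<and>
       set as \<subseteq> adom D \<union> fo_consts (\<Phi> R) \<and> adom_sat D (\<Phi> R) as}"

definition image_pdb ::
  "('s \<Rightarrow> nat) \<Rightarrow> 's set \<Rightarrow> ('s \<Rightarrow> ('r, 'u) fo) \<Rightarrow> ('r, 'u) inst pmf \<Rightarrow> ('s, 'u) inst pmf" where
  "image_pdb ar' S' \<Phi> P = map_pmf (apply_view ar' S' \<Phi>) P"

end

theory Submission imports Defs begin
lemma term_consts_finite: "finite (term_consts t)"
  by (cases t) auto

lemma fo_consts_finite: "finite (fo_consts \<phi>)"
  by (induction \<phi>) (auto simp: term_consts_finite)

lemma card_adom_le:
  assumes "is_instance ar S D" "finite S"
  shows "card (adom D) \<le> card D * sum ar S"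
proof -
  have fin: "finite D" using assms(1) by (simp add: is_instance_def)
  have "card (adom D) = card (\<Union>x\<in>D. (\<lambda>(R, as). set as) x)"
    by (simp add: adom_def)
  also have "\<dots> \<le> (\<Sum>x\<in>D. card ((\<lambda>(R, as). set as) x))"
    using fin by (rule card_UN_le)
  also have "\<dots> \<le> (\<Sum>x\<in>D. sum ar S)"
  proof (rule sum_mono)
    fix x assume "x \<in> D"
    then obtain R as where x: "x = (R, as)" "R \<in> S" "length as = ar R"
      using assms(1) unfolding is_instance_def by fastforce
    have "card (set as) \<le> length as" by (rule card_length)
    also have "\<dots> \<le> sum ar S" using x assms(2) by (simp add: member_le_sum)
    finally show "card ((\<lambda>(R, as). set as) x) \<le> sum ar S" using x by simp
  qed
  also have "\<dots> = card D * sum ar S" by simp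
  finally show ?thesis .
qed

lemma finite_adom:
  assumes "is_instance ar S D"
  shows "finite (adom D)"
  using assms unfolding is_instance_def adom_def by auto

lemma card_view_le:
  assumes "finite S'" "finite (adom D)"
  shows "card (apply_view ar' S' \<Phi> D) \<le>
     (\<Sum>R\<in>S'. (card (adom D) + card (fo_consts (\<Phi> R))) ^ ar' R)"
proof -
  define B where "B R = adom D \<union> fo_consts (\<Phi> R)" for R
  have finB: "finite (B R)" for R using assms(2) fo_consts_finite by (simp add: B_def)
  have sub: "apply_view ar' S' \<Phi> D \<subseteq> (\<Union>R\<in>S'. Pair R ` {as. set as \<subseteq> B R \<and> length as = ar' R})"
    unfolding apply_view_def B_def by auto
  have fin: "finite (\<Union>R\<in>S'. Pair R ` {as. set as \<subseteq> B R \<and> length as = ar' R})"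
    using assms(1) finB by (auto intro!: finite_lists_length_eq)
  have "card (apply_view ar' S' \<Phi> D) \<le> card (\<Union>R\<in>S'. Pair R ` {as. set as \<subseteq> B R \<and> length as = ar' R})"
    by (rule card_mono[OF fin sub])
  also have "\<dots> \<le> (\<Sum>R\<in>S'. card (Pair R ` {as. set as \<subseteq> B R \<and> length as = ar' R}))"
    using assms(1) by (rule card_UN_le)
  also have "\<dots> \<le> (\<Sum>R\<in>S'. (card (adom D) + card (fo_consts (\<Phi> R))) ^ ar' R)"
  proof (rule sum_mono)
    fix R assume "R \<in> S'"
    have "card (Pair R ` {as. set as \<subseteq> B R \<and> length as = ar' R}) \<le> card {as. set as \<subseteq> B R \<and> length as = ar' R}"
      by (rule card_image_le) (auto intro!: finite_lists_length_eq finB)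
    also have "\<dots> = card (B R) ^ ar' R" using finB by (rule card_lists_length_eq)
    also have "\<dots> \<le> (card (adom D) + card (fo_consts (\<Phi> R))) ^ ar' R"
      by (rule power_mono) (auto simp: B_def card_Un_le)
    finally show "card (Pair R ` {as. set as \<subseteq> B R \<and> length as = ar' R}) \<le> (card (adom D) + card (fo_consts (\<Phi> R))) ^ ar' R" .
  qed
  finally show ?thesis .
qed

lemma pow_bound: "((n::nat) + 1) ^ j \<le> 2 ^ j * (n ^ (j + 1) + 1)"
proof (cases "n = 0")
  case True then show ?thesis by simp
next
  case False
  have "(n + 1) ^ j \<le> (2 * n) ^ j" using False by (intro power_mono) auto
  also have "\<dots> = 2 ^ j * n ^ j" by (simp add: power_mult_distrib)
  also have "n ^ j \<le> n ^ (j + 1)" using False by (intro power_increasing) auto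
  hence "2 ^ j * n ^ j \<le> 2 ^ j * n ^ (j + 1)" by (rule mult_le_mono2)
  also have "\<dots> \<le> 2 ^ j * (n ^ (j + 1) + 1)" by simp
  finally show ?thesis .
qed
lemma bridge:
  fixes f :: "'a \<Rightarrow> real"
  shows "(\<lambda>x. f x * pmf p x) summable_on set_pmf p \<longleftrightarrow> integrable (measure_pmf p) f"
proof -
  have "(\<lambda>x. f x * pmf p x) summable_on set_pmf p \<longleftrightarrow> Infinite_Sum.abs_summable_on (\<lambda>x. f x * pmf p x) (set_pmf p)"
    by (rule summable_on_iff_abs_summable_on_real)
  also have "\<dots> \<longleftrightarrow> Infinite_Set_Sum.abs_summable_on (\<lambda>x. f x * pmf p x) (set_pmf p)"
    by (rule abs_summable_equivalent)
  also have "\<dots> \<longleftrightarrow> Infinite_Set_Sum.abs_summable_on (\<lambda>x. f x * pmf p x) UNIV"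
    by (rule abs_summable_on_cong_neutral) (simp_all add: set_pmf_iff)
  also have "\<dots> \<longleftrightarrow> integrable (count_space UNIV) (\<lambda>x. pmf p x *\<^sub>R f x)"
    unfolding abs_summable_on_def by (simp only: real_scaleR_def mult.commute)
  also have "\<dots> \<longleftrightarrow> integrable (density (count_space UNIV) (pmf p)) f"
    by (rule integrable_density[symmetric]) auto
  also have "\<dots> \<longleftrightarrow> integrable (measure_pmf p) f"
    by (simp only: measure_pmf_eq_density)
  finally show ?thesis .
qed
lemma view_bound:
  fixes ar :: "'r \<Rightarrow> nat" and S :: "'r set"
    and ar' :: "'s \<Rightarrow> nat" and S' :: "'s set"
    and \<Phi> :: "'s \<Rightarrow> ('r, 'u) fo"
  assumes "finite S" "finite S'" "S' \<noteq> {}" "is_instance ar S D"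
  defines "M \<equiv> sum ar S" and "C \<equiv> (\<Sum>R\<in>S'. card (fo_consts (\<Phi> R)))" and "A \<equiv> Max (ar' ` S')"
  shows "card (apply_view ar' S' \<Phi> D) \<le> card S' * (M + C + 1) ^ A * (card D + 1) ^ A"
proof -
  let ?n = "card D"
  have ad: "card (adom D) \<le> ?n * M" unfolding M_def by (rule card_adom_le[OF assms(4,1)])
  have "card (apply_view ar' S' \<Phi> D) \<le> (\<Sum>R\<in>S'. (card (adom D) + card (fo_consts (\<Phi> R))) ^ ar' R)"
    by (rule card_view_le[OF assms(2) finite_adom[OF assms(4)]])
  also have "\<dots> \<le> (\<Sum>R\<in>S'. ((M + C + 1) * (?n + 1)) ^ A)"
  proof (rule sum_mono)
    fix R assume R: "R \<in> S'"
    have c: "card (fo_consts (\<Phi> R)) \<le> C" unfolding C_def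
      by (rule member_le_sum[OF R]) (simp_all add: assms(2))
    have e: "ar' R \<le> A" unfolding A_def using R assms(2) by auto
    have "(card (adom D) + card (fo_consts (\<Phi> R))) ^ ar' R \<le> (card (adom D) + card (fo_consts (\<Phi> R)) + 1) ^ ar' R"
      by (rule power_mono) auto
    also have "\<dots> \<le> (card (adom D) + card (fo_consts (\<Phi> R)) + 1) ^ A"
      by (rule power_increasing[OF e]) auto
    also have "\<dots> \<le> ((M + C + 1) * (?n + 1)) ^ A"
    proof (rule power_mono)
      have "card (adom D) + card (fo_consts (\<Phi> R)) + 1 \<le> ?n * M + C + 1" using ad c by simp
      also have "\<dots> \<le> (M + C + 1) * (?n + 1)" by (simp add: algebra_simps)
      finally show "card (adom D) + card (fo_consts (\<Phi> R)) + 1 \<le> (M + C + 1) * (?n + 1)" .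
    qed simp
    finally show "(card (adom D) + card (fo_consts (\<Phi> R))) ^ ar' R \<le> ((M + C + 1) * (?n + 1)) ^ A" .
  qed
  also have "\<dots> = card S' * (M + C + 1) ^ A * (?n + 1) ^ A"
    unfolding sum_constant power_mult_distrib by (simp add: mult.assoc)
  finally show ?thesis .
qed

theorem lemma3p5:
  fixes ar :: "'r \<Rightarrow> nat" and S :: "'r set"
    and ar' :: "'s \<Rightarrow> nat" and S' :: "'s set"
    and P :: "('r, 'u::countable) inst pmf"
    and \<Phi> :: "'s \<Rightarrow> ('r, 'u) fo"
  assumes "infinite (UNIV :: 'u set)"
    and "is_pdb ar S P"
    and "finite_moments P"
    and "is_fo_view ar S ar' S' \<Phi>"
  shows "finite_moments (image_pdb ar' S' \<Phi> P)"
proof -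
  have finS: "finite S" and inst: "\<And>D. D \<in> set_pmf P \<Longrightarrow> is_instance ar S D"
    using assms(2) by (auto simp: is_pdb_def is_schema_def)
  have finS': "finite S'" and neS': "S' \<noteq> {}"
    using assms(4) by (auto simp: is_fo_view_def is_schema_def)
  define M where "M = sum ar S"
  define C where "C = (\<Sum>R\<in>S'. card (fo_consts (\<Phi> R)))"
  define A where "A = Max (ar' ` S')"
  define K where "K = card S' * (M + C + 1) ^ A"
  let ?V = "apply_view ar' S' \<Phi>"
  show ?thesis
    unfolding finite_moments_def
  proof (intro allI impI)
    fix k :: nat assume k: "k > 0"
    have bnd: "card (?V D) ^ k \<le> K ^ k * 2 ^ (A * k) * (card D ^ (A * k + 1) + 1)"
      if D: "D \<in> set_pmf P" for D
    proof -
      have "card (?V D) \<le> K * (card D + 1) ^ A"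
        unfolding K_def M_def C_def A_def by (rule view_bound[OF finS finS' neS' inst[OF D]])
      hence "card (?V D) ^ k \<le> (K * (card D + 1) ^ A) ^ k" by (rule power_mono) (rule zero_le)
      also have "\<dots> = K ^ k * (card D + 1) ^ (A * k)"
        by (simp only: power_mult_distrib power_mult)
      also have "\<dots> \<le> K ^ k * (2 ^ (A * k) * (card D ^ (A * k + 1) + 1))"
        by (rule mult_le_mono2) (rule pow_bound)
      finally show ?thesis by (simp only: mult.assoc)
    qed
    have "(\<lambda>D. real (card D) ^ (A * k + 1) * pmf P D) summable_on set_pmf P"
      using assms(3)[unfolded finite_moments_def, rule_format, of "A * k + 1"] by simp
    hence i1: "integrable (measure_pmf P) (\<lambda>D. real (card D) ^ (A * k + 1))"
      by (simp only: bridge)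
    have i2: "integrable (measure_pmf P) (\<lambda>D. real (K ^ k * 2 ^ (A * k)) * (real (card D) ^ (A * k + 1) + 1))"
      by (intro integrable_mult_right Bochner_Integration.integrable_add i1 measure_pmf.integrable_const)
    have eq: "(\<lambda>D. real (K ^ k * 2 ^ (A * k)) * (real (card D) ^ (A * k + 1) + 1))
        = (\<lambda>D. real (K ^ k * 2 ^ (A * k) * (card D ^ (A * k + 1) + 1)))"
      by (rule ext) (simp only: of_nat_mult of_nat_add of_nat_power of_nat_1)
    have i3: "integrable (measure_pmf P) (\<lambda>D. real (K ^ k * 2 ^ (A * k) * (card D ^ (A * k + 1) + 1)))"
      using i2 unfolding eq .
    have "integrable (measure_pmf P) (\<lambda>D. real (card (?V D) ^ k))"
    proof (rule Bochner_Integration.integrable_bound[OF i3])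
      show "(\<lambda>D. real (card (?V D) ^ k)) \<in> borel_measurable (measure_pmf P)" by simp
      show "AE D in measure_pmf P. norm (real (card (?V D) ^ k)) \<le> norm (real (K ^ k * 2 ^ (A * k) * (card D ^ (A * k + 1) + 1)))"
        unfolding AE_measure_pmf_iff norm_of_nat
      proof (intro ballI)
        fix D assume D: "D \<in> set_pmf P"
        show "real (card (?V D) ^ k) \<le> real (K ^ k * 2 ^ (A * k) * (card D ^ (A * k + 1) + 1))"
          using bnd[OF D] by (rule of_nat_mono)
      qed
    qed
    hence "integrable (measure_pmf P) (\<lambda>D. real (card (?V D)) ^ k)"
      by (simp only: of_nat_power)
    thus "(\<lambda>D. real (card D) ^ k * pmf (image_pdb ar' S' \<Phi> P) D) summable_on set_pmf (image_pdb ar' S' \<Phi> P)"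
      unfolding image_pdb_def by (simp only: bridge integrable_map_pmf_eq)
  qed
qed
end
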